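(* Under the standing assumptions (with $K\neq 0$), for $r\in[0,r_A)$ the matrix $I-\tilde A-rK$ is invertible and $M(r):=L[I-\tilde A-rK]^{-1}B$ satisfies: (i) $M(r)$ is entrywise strictly positive and depends continuously on $r$; (ii) for $0\le r_1<r_2<r_A$, $M(r_1)<M(r_2)$ entrywise strictly (every entry strictly increases); (iii) $r\mapsto\lambda_{\max}(M(r))$ is strictly increasing on $[0,r_A)$ and $\lambda_{\max}(M(r))\to+\infty$ as $r\to r_A^-$.
   Context: Fix $n\ge 2$. $A$ and $K$ are $n\times n$ entrywise nonnegative real matrices, with $K$ not the zero matrix; $\delta_1,\dots,\delta_n\in(0,1]$, $D=K\,\mathrm{diag}(\delta_1,\dots,\delta_n)$, and $\tilde A=A+D$. $L=\mathrm{diag}(l_1,\dots,l_n)$ with all $l_j>0$. $B$ is an $n\times n$ entrywise nonnegative matrix with no zero column. Standing assumption: $\tilde A$ is irreducible and $\lambda_{\max}(\tilde A)<1$, where $\lambda_{\max}(X)$ denotes the spectral radius of a square matrix $X$. $r_A>0$ denotes the (technical maximum) profit rate defined by $\lambda_{\max}(\tilde A+r_AK)=1$; for $r\in[0,r_A)$ one has $\lambda_{\max}(\tilde A+rK)<1$. *)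

theory Defs
  imports "HOL-Analysis.Analysis"
begin

definition cmat :: "real^'n^'n \<Rightarrow> complex^'n^'n" where
  "cmat X = (\<chi> i j. complex_of_real (X $ i $ j))"

definition spec_rad :: "real^'n^'n \<Rightarrow> real" where
  "spec_rad X = Max {cmod c | c. \<exists>v. v \<noteq> 0 \<and> cmat X *v v = c *s v}"

text \<open>Irreducibility of a square matrix: its associated digraph
  (edge i \<rightarrow> j iff X i j \<noteq> 0) is strongly connected.\<close>
definition irreducible_mat :: "real^'n^'n \<Rightarrow> bool" where
  "irreducible_mat X \<longleftrightarrow> (\<forall>i j. (i, j) \<in> {(p, q). X $ p $ q \<noteq> 0}\<^sup>+)"

definition diag_mat :: "(real^'n) \<Rightarrow> real^'n^'n" where
  "diag_mat d = (\<chi> i j. if i = j then d $ i else 0)"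

definition nonneg_mat :: "real^'n^'m \<Rightarrow> bool" where
  "nonneg_mat X \<longleftrightarrow> (\<forall>i j. 0 \<le> X $ i $ j)"

end

theory Submission
  imports Defs
begin

lemma mv_comp: "(P *v x)$i = (\<Sum>j\<in>UNIV. P$i$j * x$j)"
  by (simp add: matrix_vector_mult_def)

lemma vm_comp: "(x v* P)$j = (\<Sum>i\<in>UNIV. x$i * P$i$j)"
  by (simp add: vector_matrix_mult_def)

lemma trancl_closed:
  assumes "(i, j) \<in> {(p, q). X $ p $ q \<noteq> 0}\<^sup>+" and "\<And>p q. X$p$q \<noteq> 0 \<Longrightarrow> Q p \<Longrightarrow> Q q" and "Q i"
  shows "Q j"
  using assms(1) by (induction rule: trancl_induct) (use assms in auto)

lemma eig_indep:
  fixes X :: "complex^'n^'n"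
  assumes "finite C" "\<forall>c\<in>C. ev c \<noteq> 0 \<and> X *v ev c = c *s ev c"
  shows "(\<Sum>c\<in>C. a c *s ev c) = 0 \<Longrightarrow> \<forall>c\<in>C. a c = 0"
  using assms
proof (induction C arbitrary: a rule: finite_induct)
  case empty
  then show ?case by simp
next
  case (insert c0 C)
  have s: "a c0 *s ev c0 + (\<Sum>c\<in>C. a c *s ev c) = 0"
    using insert by simp
  have "X *v (a c0 *s ev c0 + (\<Sum>c\<in>C. a c *s ev c)) = 0" using s by simp
  then have s2: "(a c0 * c0) *s ev c0 + (\<Sum>c\<in>C. (a c * c) *s ev c) = 0"
    using insert.prems(2) by (simp add: vec.add vec.sum vec.scale)
  have "(\<Sum>c\<in>C. (a c * (c - c0)) *s ev c) = (\<Sum>c\<in>C. (a c * c) *s ev c) - c0 *s (\<Sum>c\<in>C. a c *s ev c)"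
    by (simp add: algebra_simps sum_subtractf vec.scale_sum_right vector_sadd_rdistrib vector_ssub_ldistrib)
  also have "\<dots> = 0"
  proof -
    have "(\<Sum>c\<in>C. a c *s ev c) = - (a c0 *s ev c0)" using s by (simp add: eq_neg_iff_add_eq_0 add.commute)
    moreover have "(\<Sum>c\<in>C. (a c * c) *s ev c) = - ((a c0 * c0) *s ev c0)" using s2 by (simp add: eq_neg_iff_add_eq_0 add.commute)
    ultimately show ?thesis by (simp add: vector_smult_assoc mult.commute)
  qed
  finally have "\<forall>c\<in>C. a c * (c - c0) = 0"
    using insert.IH[of "\<lambda>c. a c * (c - c0)"] insert.prems(2) by blast
  then have C0: "\<forall>c\<in>C. a c = 0" using insert.hyps(2) by auto
  then have "a c0 *s ev c0 = 0" using s by simp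
  then have "a c0 = 0" using insert.prems(2) by (simp add: vec.scale_eq_0_iff)
  then show ?case using C0 by simp
qed

lemma eig_finite:
  fixes X :: "complex^'n^'n"
  shows "finite {c. \<exists>v. v \<noteq> 0 \<and> X *v v = c *s v}" (is "finite ?E")
proof -
  define ev where "ev c = (SOME v. v \<noteq> 0 \<and> X *v v = c *s v)" for c
  have evp: "\<forall>c\<in>?E. ev c \<noteq> 0 \<and> X *v ev c = c *s ev c"
    unfolding ev_def by (metis (mono_tags, lifting) mem_Collect_eq someI_ex)
  have bound: "card C \<le> CARD('n)" if "C \<subseteq> ?E" "finite C" for C
  proof -
    have evC: "\<forall>c\<in>C. ev c \<noteq> 0 \<and> X *v ev c = c *s ev c" using evp that by blast
    have inj: "inj_on ev C"
    proof (rule inj_onI)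
      fix c d assume "c \<in> C" "d \<in> C" "ev c = ev d"
      then have "c *s ev c = d *s ev c" "ev c \<noteq> 0" using evC by metis+
      then have "(c - d) *s ev c = 0" by (simp add: vec.scale_left_diff_distrib)
      then show "c = d" using \<open>ev c \<noteq> 0\<close> by (simp add: vec.scale_eq_0_iff)
    qed
    have ind: "vec.independent (ev ` C)"
      unfolding vec.independent_explicit
    proof (intro conjI allI impI ballI)
      show "finite (ev ` C)" using that by simp
    next
      fix g v assume g: "(\<Sum>v\<in>ev ` C. g v *s v) = 0" and v: "v \<in> ev ` C"
      have "(\<Sum>c\<in>C. g (ev c) *s ev c) = 0" using g by (simp add: sum.reindex[OF inj])
      then have "\<forall>c\<in>C. g (ev c) = 0" using eig_indep[OF that(2) evC, of "\<lambda>c. g (ev c)"] by blast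
      then show "g v = 0" using v by blast
    qed
    have "card (ev ` C) \<le> vec.dim (ev ` C)" using vec.independent_bound_general[OF ind] by blast
    also have "\<dots> \<le> vec.dim (UNIV :: (complex^'n) set)" by (rule vec.dim_subset) simp
    also have "\<dots> = CARD('n)" by (rule vec_dim_card)
    finally show ?thesis using card_image[OF inj] by simp
  qed
  show ?thesis
  proof (rule ccontr)
    assume "infinite ?E"
    then obtain C where "finite C" "card C = Suc CARD('n)" "C \<subseteq> ?E"
      using infinite_arbitrarily_large by blast
    then show False using bound[of C] by simp
  qed
qed


lemma brouwer_eig:
  fixes P :: "real^'n^'n"
  assumes nn: "\<forall>i j. 0 \<le> P$i$j" and col: "\<forall>j. \<exists>i. P$i$j \<noteq> 0"
  shows "\<exists>x \<mu>. (\<forall>i. 0 \<le> x$i) \<and> x \<noteq> 0 \<and> 0 < \<mu> \<and> P *v x = \<mu> *\<^sub>R x"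
proof -
  define S where "S = {x::real^'n. (\<forall>i. 0 \<le> x$i) \<and> sum (\<lambda>i. x$i) UNIV = 1}"
  define \<sigma> where "\<sigma> x = sum (\<lambda>i. (P *v x)$i) UNIV" for x
  define f where "f x = (1 / \<sigma> x) *\<^sub>R (P *v x)" for x
  have Pxnn: "0 \<le> (P *v x)$i" if "\<forall>i. 0 \<le> x$i" for x i
    using that nn by (auto simp: matrix_vector_mult_def intro!: sum_nonneg)
  have \<sigma>pos: "0 < \<sigma> x" if "x \<in> S" for x
  proof -
    have xnn: "\<forall>i. 0 \<le> x$i" and xs: "sum (\<lambda>i. x$i) UNIV = 1" using that by (auto simp: S_def)
    obtain j where j: "0 < x$j"
    proof (rule ccontr)
      assume "\<not> thesis"
      then have "\<forall>j. x$j \<le> 0" using that by (meson not_le)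
      then have "\<forall>j. x$j = 0" using xnn by (meson order_antisym)
      then show False using xs by simp
    qed
    obtain i where i: "P$i$j \<noteq> 0" using col by blast
    then have "0 < P$i$j" using nn by (metis order_le_neq_trans)
    then have "0 < P$i$j * x$j" using j by simp
    also have "\<dots> \<le> (P *v x)$i"
      unfolding matrix_vector_mult_def
      using nn xnn by (auto intro!: member_le_sum)
    also have "\<dots> \<le> \<sigma> x" unfolding \<sigma>_def using Pxnn[OF xnn] by (auto intro!: member_le_sum)
    finally show ?thesis .
  qed
  have clS: "closed S"
  proof -
    have "S = {x::real^'n. \<forall>i. 0 \<le> x$i} \<inter> {x. sum (\<lambda>i. x$i) UNIV = 1}" by (auto simp: S_def)
    moreover have "closed {x::real^'n. sum (\<lambda>i. x$i) UNIV = 1}"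
      by (intro closed_Collect_eq continuous_intros)
    ultimately show ?thesis using closed_positive_orthant by (metis closed_Int)
  qed
  have bS: "bounded S"
  proof -
    have "S \<subseteq> cbox 0 1"
    proof
      fix x assume "x \<in> S"
      then have xnn: "\<forall>i. 0 \<le> x$i" and xs: "sum (\<lambda>i. x$i) UNIV = 1" by (auto simp: S_def)
      have "x$i \<le> 1" for i using xs xnn member_le_sum[of i UNIV "\<lambda>i. x$i"] by auto
      then show "x \<in> cbox 0 1" using xnn by (simp add: mem_box_cart)
    qed
    then show ?thesis using bounded_cbox bounded_subset by blast
  qed
  have cvS: "convex S"
    unfolding convex_def
  proof (intro allI impI ballI)
    fix x y :: "real^'n" and u v :: real
    assume "x \<in> S" "y \<in> S" "0 \<le> u" "0 \<le> v" "u + v = 1"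
    then show "u *\<^sub>R x + v *\<^sub>R y \<in> S"
      by (simp add: S_def sum.distrib flip: sum_distrib_left)
  qed
  have neS: "S \<noteq> {}"
  proof -
    have "(\<chi> i. 1 / real CARD('n)) \<in> S" by (simp add: S_def)
    then show ?thesis by blast
  qed
  have contf: "continuous_on S f"
    unfolding f_def \<sigma>_def
    using \<sigma>pos unfolding \<sigma>_def
    by (intro continuous_intros) (auto dest: less_irrefl_nat, metis less_irrefl)
  have fS: "f \<in> S \<rightarrow> S"
  proof
    fix x assume x: "x \<in> S"
    then have xnn: "\<forall>i. 0 \<le> x$i" by (auto simp: S_def)
    show "f x \<in> S"
      unfolding S_def f_def using Pxnn[OF xnn] \<sigma>pos[OF x]
      by (auto simp: \<sigma>_def simp flip: sum_divide_distrib)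
  qed
  obtain x where x: "x \<in> S" "f x = x" using brouwer[OF compact_eq_bounded_closed[THEN iffD2, OF conjI[OF bS clS]] cvS neS contf fS] by blast
  have "P *v x = \<sigma> x *\<^sub>R x"
    using x(2) \<sigma>pos[OF x(1)] unfolding f_def by (metis divide_self_if eq_vector_fraction_iff less_irrefl scaleR_one)
  moreover have "x \<noteq> 0" using x(1) by (auto simp: S_def)
  moreover have "\<forall>i. 0 \<le> x$i" using x(1) by (auto simp: S_def)
  ultimately show ?thesis using \<sigma>pos[OF x(1)] by blast
qed


lemma zero_closed_pos:
  fixes P :: "real^'n^'n" and x :: "real^'n"
  assumes irr: "irreducible_mat P" and xnn: "\<forall>i. 0 \<le> x$i" and xnz: "x \<noteq> 0"
    and cl: "\<forall>p q. P$p$q \<noteq> 0 \<longrightarrow> x$p = 0 \<longrightarrow> x$q = 0"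
  shows "\<forall>i. 0 < x$i"
proof
  fix i
  obtain j where j: "x$j \<noteq> 0" using xnz by (metis vec_eq_iff zero_index)
  show "0 < x$i"
  proof (rule ccontr)
    assume "\<not> 0 < x$i"
    moreover have "0 \<le> x$i" using xnn by blast
    ultimately have "x$i = 0" by linarith
    moreover have "(i, j) \<in> {(p, q). P $ p $ q \<noteq> 0}\<^sup>+" using irr by (simp add: irreducible_mat_def)
    ultimately have "x$j = 0" using trancl_closed[of i j P "\<lambda>p. x$p = 0"] cl by blast
    then show False using j by simp
  qed
qed

lemma irr_col: "irreducible_mat P \<Longrightarrow> \<exists>i. P$i$j \<noteq> 0"
proof -
  assume "irreducible_mat P"
  then have "(j, j) \<in> {(p, q). P $ p $ q \<noteq> 0}\<^sup>+" by (simp add: irreducible_mat_def)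
  then show ?thesis
  proof (cases rule: tranclE)
    case base
    then show ?thesis by blast
  next
    case (step c)
    then show ?thesis by blast
  qed
qed

lemma irr_transpose: "irreducible_mat P \<Longrightarrow> irreducible_mat (transpose P)"
proof -
  assume irr: "irreducible_mat P"
  have E: "{(p, q). transpose P $ p $ q \<noteq> 0} = {(p, q). P $ p $ q \<noteq> 0}\<inverse>"
    by (auto simp: transpose_def)
  show ?thesis unfolding irreducible_mat_def E
  proof (intro allI)
    fix i j
    have "(j, i) \<in> {(p, q). P $ p $ q \<noteq> 0}\<^sup>+" using irr by (simp add: irreducible_mat_def)
    then show "(i, j) \<in> ({(p, q). P $ p $ q \<noteq> 0}\<inverse>)\<^sup>+" by (intro trancl_converseI) simp
  qed
qed

lemma eigvec_pos:
  fixes P :: "real^'n^'n"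
  assumes nn: "\<forall>i j. 0 \<le> P$i$j" and irr: "irreducible_mat P"
  shows "\<exists>x \<mu>. (\<forall>i. 0 < x$i) \<and> 0 < \<mu> \<and> P *v x = \<mu> *\<^sub>R x"
proof -
  obtain x \<mu> where x: "\<forall>i. 0 \<le> x$i" "x \<noteq> 0" "0 < \<mu>" "P *v x = \<mu> *\<^sub>R x"
    using brouwer_eig[OF nn] irr_col[OF irr] by blast
  have "\<forall>p q. P$p$q \<noteq> 0 \<longrightarrow> x$p = 0 \<longrightarrow> x$q = 0"
  proof (intro allI impI)
    fix p q assume pq: "P$p$q \<noteq> 0" "x$p = 0"
    have "(P *v x)$p = (\<mu> *\<^sub>R x)$p" using x(4) by simp
    then have "(\<Sum>j\<in>UNIV. P$p$j * x$j) = \<mu> * x$p" by (simp add: mv_comp)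
    then have s0: "(\<Sum>j\<in>UNIV. P$p$j * x$j) = 0" using pq by simp
    have "\<forall>j\<in>UNIV. 0 \<le> P$p$j * x$j" using nn x(1) by simp
    then have "\<forall>j\<in>UNIV. P$p$j * x$j = 0" using sum_nonneg_eq_0_iff[of UNIV "\<lambda>j. P$p$j * x$j"] s0 by simp
    then have "P$p$q * x$q = 0" by blast
    then show "x$q = 0" using pq by simp
  qed
  then show ?thesis using zero_closed_pos[OF irr x(1) x(2)] x by blast
qed



lemma cmat_eig:
  fixes P :: "real^'n^'n"
  assumes "P *v v = \<mu> *\<^sub>R v"
  shows "cmat P *v (\<chi> i. complex_of_real (v$i)) = complex_of_real \<mu> *s (\<chi> i. complex_of_real (v$i))"
proof -
  have e: "(\<Sum>j\<in>UNIV. P$i$j * v$j) = \<mu> * v$i" for i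
  proof -
    have "(P *v v)$i = (\<mu> *\<^sub>R v)$i" using assms by simp
    then show ?thesis by (simp add: mv_comp)
  qed
  have "(\<Sum>j\<in>UNIV. complex_of_real (P$i$j) * complex_of_real (v$j)) = complex_of_real \<mu> * complex_of_real (v$i)" for i
  proof -
    have "(\<Sum>j\<in>UNIV. complex_of_real (P$i$j) * complex_of_real (v$j)) = complex_of_real (\<Sum>j\<in>UNIV. P$i$j * v$j)"
      by simp
    also have "\<dots> = complex_of_real (\<mu> * v$i)" using e by simp
    finally show ?thesis by simp
  qed
  then show ?thesis
    by (simp add: vec_eq_iff mv_comp cmat_def)
qed

lemma perron:
  fixes P :: "real^'n^'n"
  assumes nn: "\<forall>i j. 0 \<le> P$i$j" and irr: "irreducible_mat P"
  shows "\<exists>v w. (\<forall>i. 0 < v$i) \<and> (\<forall>i. 0 < w$i) \<and> P *v v = spec_rad P *\<^sub>R v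
     \<and> w v* P = spec_rad P *\<^sub>R w \<and> 0 < spec_rad P"
proof -
  obtain v \<mu> where v: "\<forall>i. 0 < v$i" "0 < \<mu>" "P *v v = \<mu> *\<^sub>R v"
    using eigvec_pos[OF nn irr] by blast
  have nnT: "\<forall>i j. 0 \<le> transpose P $i$j" using nn by (simp add: transpose_def)
  obtain w \<mu>' where w: "\<forall>i. 0 < w$i" "0 < \<mu>'" "transpose P *v w = \<mu>' *\<^sub>R w"
    using eigvec_pos[OF nnT irr_transpose[OF irr]] by blast
  have wP: "w v* P = \<mu>' *\<^sub>R w" using w(3) by simp
  have wv: "0 < inner w v"
    unfolding inner_vec_def using v(1) w(1) by (intro sum_pos) auto
  have "inner w (P *v v) = inner (w v* P) v" by (simp add: dot_lmul_matrix)
  then have "\<mu> * inner w v = \<mu>' * inner w v" using v(3) wP by simp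
  then have mm: "\<mu>' = \<mu>" using wv by simp
  have wP': "(\<Sum>i\<in>UNIV. w$i * P$i$j) = \<mu> * w$j" for j
  proof -
    have "(w v* P)$j = (\<mu>' *\<^sub>R w)$j" using wP by simp
    then show ?thesis using mm by (simp add: vm_comp)
  qed
  define E where "E = {c. \<exists>z. z \<noteq> 0 \<and> cmat P *v z = c *s z}"
  have setE: "{cmod c | c. \<exists>z. z \<noteq> 0 \<and> cmat P *v z = c *s z} = cmod ` E"
    unfolding E_def by blast
  have finE: "finite (cmod ` E)" unfolding E_def using eig_finite by blast
  have memE: "\<mu> \<in> cmod ` E"
  proof -
    have "(\<chi> i. complex_of_real (v$i)) \<noteq> 0"
    proof
      assume "(\<chi> i. complex_of_real (v$i)) = 0"
      then have "complex_of_real (v$i) = 0" for i by (metis vec_lambda_beta zero_index)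
      then show False using v(1) by (metis of_real_eq_0_iff less_irrefl)
    qed
    then have "complex_of_real \<mu> \<in> E" unfolding E_def using cmat_eig[OF v(3)] by blast
    moreover have "cmod (complex_of_real \<mu>) = \<mu>" using v(2) by simp
    ultimately show ?thesis by (metis image_eqI)
  qed
  have le: "s \<le> \<mu>" if sE: "s \<in> cmod ` E" for s
  proof -
    obtain c z where cz: "s = cmod c" "z \<noteq> 0" "cmat P *v z = c *s z" using sE unfolding E_def by blast
    have row: "cmod c * cmod (z$i) \<le> (\<Sum>j\<in>UNIV. P$i$j * cmod (z$j))" for i
    proof -
      have "(cmat P *v z)$i = (c *s z)$i" using cz(3) by simp
      then have "c * z$i = (\<Sum>j\<in>UNIV. complex_of_real (P$i$j) * z$j)"
        by (simp add: mv_comp cmat_def)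
      then have "cmod c * cmod (z$i) = cmod (\<Sum>j\<in>UNIV. complex_of_real (P$i$j) * z$j)"
        by (metis norm_mult)
      also have "\<dots> \<le> (\<Sum>j\<in>UNIV. cmod (complex_of_real (P$i$j) * z$j))" by (rule norm_sum)
      also have "\<dots> = (\<Sum>j\<in>UNIV. P$i$j * cmod (z$j))"
        using nn by (simp add: norm_mult)
      finally show ?thesis .
    qed
    have "cmod c * (\<Sum>i\<in>UNIV. w$i * cmod (z$i)) = (\<Sum>i\<in>UNIV. w$i * (cmod c * cmod (z$i)))"
      by (simp add: sum_distrib_left mult_ac)
    also have "\<dots> \<le> (\<Sum>i\<in>UNIV. w$i * (\<Sum>j\<in>UNIV. P$i$j * cmod (z$j)))"
      using row w(1) by (intro sum_mono mult_left_mono) (auto intro: less_imp_le)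
    also have "\<dots> = (\<Sum>i\<in>UNIV. \<Sum>j\<in>UNIV. w$i * P$i$j * cmod (z$j))"
      by (simp add: sum_distrib_left mult.assoc)
    also have "\<dots> = (\<Sum>j\<in>UNIV. \<Sum>i\<in>UNIV. w$i * P$i$j * cmod (z$j))"
      by (rule sum.swap)
    also have "\<dots> = (\<Sum>j\<in>UNIV. (\<Sum>i\<in>UNIV. w$i * P$i$j) * cmod (z$j))"
      by (simp add: sum_distrib_right)
    also have "\<dots> = \<mu> * (\<Sum>j\<in>UNIV. w$j * cmod (z$j))"
      by (simp add: wP' sum_distrib_left mult_ac)
    finally have ineq: "cmod c * (\<Sum>i\<in>UNIV. w$i * cmod (z$i)) \<le> \<mu> * (\<Sum>j\<in>UNIV. w$j * cmod (z$j))" .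
    obtain k where k: "z$k \<noteq> 0" using cz(2) by (metis vec_eq_iff zero_index)
    have "0 < (\<Sum>j\<in>UNIV. w$j * cmod (z$j))"
    proof -
      have "0 < w$k * cmod (z$k)" using k w(1) by simp
      also have "\<dots> \<le> (\<Sum>j\<in>UNIV. w$j * cmod (z$j))"
        using w(1) by (intro member_le_sum) (simp_all add: less_imp_le)
      finally show ?thesis .
    qed
    then show ?thesis using ineq cz(1) by simp
  qed
  have sr: "spec_rad P = \<mu>"
    unfolding spec_rad_def setE using finE memE le by (intro Max_eqI) blast+
  show ?thesis using v w wP mm sr by auto
qed



lemma matinv:
  fixes X :: "real^'n^'n"
  assumes "invertible X"
  shows "X ** matrix_inv X = mat 1" "matrix_inv X ** X = mat 1"
proof -
  have "\<exists>X'. X ** X' = mat 1 \<and> X' ** X = mat 1" using assms by (simp add: invertible_def)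
  then have "X ** matrix_inv X = mat 1 \<and> matrix_inv X ** X = mat 1"
    unfolding matrix_inv_def by (rule someI_ex)
  then show "X ** matrix_inv X = mat 1" "matrix_inv X ** X = mat 1" by auto
qed

lemma wsum_swap:
  fixes P :: "real^'n^'n"
  assumes "\<forall>j. (\<Sum>i\<in>UNIV. w$i * P$i$j) = \<mu> * w$j"
  shows "(\<Sum>i\<in>UNIV. w$i * (\<Sum>j\<in>UNIV. P$i$j * a j)) = \<mu> * (\<Sum>j\<in>UNIV. w$j * a j)"
proof -
  have "(\<Sum>i\<in>UNIV. w$i * (\<Sum>j\<in>UNIV. P$i$j * a j)) = (\<Sum>i\<in>UNIV. \<Sum>j\<in>UNIV. w$i * P$i$j * a j)"
    by (simp add: sum_distrib_left mult.assoc)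
  also have "\<dots> = (\<Sum>j\<in>UNIV. \<Sum>i\<in>UNIV. w$i * P$i$j * a j)"
    by (rule sum.swap)
  also have "\<dots> = (\<Sum>j\<in>UNIV. (\<Sum>i\<in>UNIV. w$i * P$i$j) * a j)"
    by (simp add: sum_distrib_right)
  also have "\<dots> = (\<Sum>j\<in>UNIV. \<mu> * w$j * a j)" using assms by simp
  also have "\<dots> = \<mu> * (\<Sum>j\<in>UNIV. w$j * a j)" by (simp add: sum_distrib_left mult.assoc)
  finally show ?thesis .
qed

lemma perron_sums:
  fixes P :: "real^'n^'n"
  assumes nn: "\<forall>i j. 0 \<le> P$i$j" and irr: "irreducible_mat P"
  shows "\<exists>v w. (\<forall>i. 0 < v$i) \<and> (\<forall>i. 0 < w$i) \<and> (\<forall>i. (\<Sum>j\<in>UNIV. P$i$j * v$j) = spec_rad P * v$i)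
     \<and> (\<forall>j. (\<Sum>i\<in>UNIV. w$i * P$i$j) = spec_rad P * w$j) \<and> 0 < spec_rad P"
proof -
  obtain v w where vw: "\<forall>i. 0 < v$i" "\<forall>i. 0 < w$i" "P *v v = spec_rad P *\<^sub>R v"
     "w v* P = spec_rad P *\<^sub>R w" "0 < spec_rad P"
    using perron[OF nn irr] by blast
  have "(\<Sum>j\<in>UNIV. P$i$j * v$j) = spec_rad P * v$i" for i
  proof -
    have "(P *v v)$i = (spec_rad P *\<^sub>R v)$i" using vw(3) by simp
    then show ?thesis by (simp add: mv_comp)
  qed
  moreover have "(\<Sum>i\<in>UNIV. w$i * P$i$j) = spec_rad P * w$j" for j
  proof -
    have "(w v* P)$j = (spec_rad P *\<^sub>R w)$j" using vw(4) by simp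
    then show ?thesis by (simp add: vm_comp)
  qed
  ultimately show ?thesis using vw by blast
qed

lemma inv_pos:
  fixes P :: "real^'n^'n"
  assumes nn: "\<forall>i j. 0 \<le> P$i$j" and irr: "irreducible_mat P" and sr: "spec_rad P < 1"
  shows "invertible (mat 1 - P)"
    and "\<forall>y. (\<forall>i. 0 \<le> y$i) \<longrightarrow> y \<noteq> 0 \<longrightarrow> (\<forall>i. 0 < (matrix_inv (mat 1 - P) *v y)$i)"
proof -
  obtain v w where v: "\<forall>i. 0 < v$i" and w: "\<forall>i. 0 < w$i"
    and Pv: "\<forall>i. (\<Sum>j\<in>UNIV. P$i$j * v$j) = spec_rad P * v$i"
    and wP: "\<forall>j. (\<Sum>i\<in>UNIV. w$i * P$i$j) = spec_rad P * w$j" and pos: "0 < spec_rad P"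
    using perron_sums[OF nn irr] by blast
  define \<mu> where "\<mu> = spec_rad P"
  have fix_eq: "x$i = y$i + (\<Sum>j\<in>UNIV. P$i$j * x$j)" if "(mat 1 - P) *v x = y" for x y i
  proof -
    have "x - P *v x = y" using that by (simp add: matrix_vector_mult_diff_rdistrib)
    then have "x$i - (P *v x)$i = y$i" by (metis vector_minus_component)
    then show ?thesis by (simp add: mv_comp)
  qed
  have inj: "\<forall>x. (mat 1 - P) *v x = 0 \<longrightarrow> x = 0"
  proof (intro allI impI)
    fix x assume x0: "(mat 1 - P) *v x = 0"
    have row: "\<bar>x$i\<bar> \<le> (\<Sum>j\<in>UNIV. P$i$j * \<bar>x$j\<bar>)" for i
    proof -
      have "x$i = (\<Sum>j\<in>UNIV. P$i$j * x$j)" using fix_eq[OF x0, of i] by simp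
      then have "\<bar>x$i\<bar> = \<bar>\<Sum>j\<in>UNIV. P$i$j * x$j\<bar>" by simp
      also have "\<dots> \<le> (\<Sum>j\<in>UNIV. \<bar>P$i$j * x$j\<bar>)" by (rule sum_abs)
      also have "\<dots> = (\<Sum>j\<in>UNIV. P$i$j * \<bar>x$j\<bar>)" using nn by (simp add: abs_mult)
      finally show ?thesis .
    qed
    have "(\<Sum>i\<in>UNIV. w$i * \<bar>x$i\<bar>) \<le> (\<Sum>i\<in>UNIV. w$i * (\<Sum>j\<in>UNIV. P$i$j * \<bar>x$j\<bar>))"
      using row w by (intro sum_mono mult_left_mono) (simp_all add: less_imp_le)
    also have "\<dots> = \<mu> * (\<Sum>j\<in>UNIV. w$j * \<bar>x$j\<bar>)"
      using wsum_swap[of w P \<mu> "\<lambda>j. \<bar>x$j\<bar>"] wP unfolding \<mu>_def by blast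
    finally have "(1 - \<mu>) * (\<Sum>i\<in>UNIV. w$i * \<bar>x$i\<bar>) \<le> 0" by (simp add: algebra_simps)
    moreover have "1 - \<mu> > 0" using sr \<mu>_def by simp
    ultimately have s0: "(\<Sum>i\<in>UNIV. w$i * \<bar>x$i\<bar>) \<le> 0" by (simp add: mult_le_0_iff)
    show "x = 0"
    proof (rule ccontr)
      assume "x \<noteq> 0"
      then obtain k where k: "x$k \<noteq> 0" by (metis vec_eq_iff zero_index)
      have "0 < w$k * \<bar>x$k\<bar>" using k w by simp
      also have "\<dots> \<le> (\<Sum>i\<in>UNIV. w$i * \<bar>x$i\<bar>)"
        using w by (intro member_le_sum) (simp_all add: less_imp_le)
      finally show False using s0 by simp
    qed
  qed
  show inv: "invertible (mat 1 - P)"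
    using inj by (simp add: invertible_left_inverse matrix_left_invertible_ker)
  show "\<forall>y. (\<forall>i. 0 \<le> y$i) \<longrightarrow> y \<noteq> 0 \<longrightarrow> (\<forall>i. 0 < (matrix_inv (mat 1 - P) *v y)$i)"
  proof (rule allI, rule impI, rule impI)
    fix y :: "real^'n" assume ynn: "\<forall>i. 0 \<le> y$i" and ynz: "y \<noteq> 0"
    define x where "x = matrix_inv (mat 1 - P) *v y"
    have xy: "(mat 1 - P) *v x = y"
      unfolding x_def by (simp add: matrix_vector_mul_assoc matinv(1)[OF inv])
    have xnn: "\<forall>i. 0 \<le> x$i"
    proof (rule ccontr)
      assume "\<not> (\<forall>i. 0 \<le> x$i)"
      then obtain i1 where i1: "x$i1 < 0" by (meson not_le)
      define T where "T = (\<lambda>i. x$i / v$i) ` UNIV"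
      define t where "t = Min T"
      have finT: "finite T" "T \<noteq> {}" by (auto simp: T_def)
      have tle: "t \<le> x$i / v$i" for i unfolding t_def T_def using finT by (simp add: T_def)
      obtain i0 where i0: "t = x$i0 / v$i0" using Min_in[OF finT] unfolding t_def T_def by blast
      have tneg: "t < 0"
      proof -
        have "x$i1 / v$i1 < 0" using i1 v by (simp add: divide_neg_pos)
        then show ?thesis using tle[of i1] by linarith
      qed
      have xge: "t * v$j \<le> x$j" for j using tle[of j] v by (simp add: pos_le_divide_eq)
      have "(\<Sum>j\<in>UNIV. P$i0$j * (t * v$j)) \<le> (\<Sum>j\<in>UNIV. P$i0$j * x$j)"
        using xge nn by (intro sum_mono mult_left_mono) auto
      moreover have "(\<Sum>j\<in>UNIV. P$i0$j * (t * v$j)) = t * (\<mu> * v$i0)"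
        using Pv unfolding \<mu>_def by (simp add: sum_distrib_left mult_ac flip: sum_distrib_left)
      moreover have "x$i0 = y$i0 + (\<Sum>j\<in>UNIV. P$i0$j * x$j)" by (rule fix_eq[OF xy])
      moreover have "x$i0 = t * v$i0"
      proof -
        have "v$i0 \<noteq> 0" using v by (metis less_irrefl)
        then show ?thesis using i0 by simp
      qed
      moreover have "0 \<le> y$i0" using ynn by blast
      ultimately have "t * v$i0 \<ge> t * (\<mu> * v$i0)" by linarith
      then have "t * v$i0 * (1 - \<mu>) \<ge> 0" by (simp add: algebra_simps)
      moreover have "t * v$i0 < 0" using tneg v by (simp add: mult_neg_pos)
      moreover have "1 - \<mu> > 0" using sr \<mu>_def by simp
      ultimately show False using mult_neg_pos[of "t * v$i0" "1 - \<mu>"] by linarith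
    qed
    have xnz: "x \<noteq> 0" using xy ynz by auto
    have cl: "\<forall>p q. P$p$q \<noteq> 0 \<longrightarrow> x$p = 0 \<longrightarrow> x$q = 0"
    proof (intro allI impI)
      fix p q assume pq: "P$p$q \<noteq> 0" "x$p = 0"
      have e: "y$p + (\<Sum>j\<in>UNIV. P$p$j * x$j) = 0" using fix_eq[OF xy, of p] pq by simp
      have "\<forall>j\<in>UNIV. 0 \<le> P$p$j * x$j" using nn xnn by simp
      moreover have "0 \<le> (\<Sum>j\<in>UNIV. P$p$j * x$j)" using nn xnn by (simp add: sum_nonneg)
      moreover have "0 \<le> y$p" using ynn by blast
      ultimately have "(\<Sum>j\<in>UNIV. P$p$j * x$j) = 0" using e by linarith
      then have "\<forall>j\<in>UNIV. P$p$j * x$j = 0"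
        using sum_nonneg_eq_0_iff[of UNIV "\<lambda>j. P$p$j * x$j"] nn xnn by simp
      then have "P$p$q * x$q = 0" by blast
      then show "x$q = 0" using pq by simp
    qed
    show "\<forall>i. 0 < (matrix_inv (mat 1 - P) *v y)$i"
      using zero_closed_pos[OF irr xnn xnz cl] unfolding x_def by blast
  qed
qed



lemma mm_comp: "(X ** Y)$i$j = (\<Sum>k\<in>UNIV. X$i$k * Y$k$j)"
  by (simp add: matrix_matrix_mult_def)

lemma diag_left: "(diag_mat d ** X)$i$j = d$i * X$i$j"
proof -
  have "(diag_mat d ** X)$i$j = (\<Sum>k\<in>UNIV. (if i = k then d$i else 0) * X$k$j)"
    by (simp add: mm_comp diag_mat_def)
  also have "\<dots> = (\<Sum>k\<in>UNIV. if k = i then d$i * X$i$j else 0)"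
    by (rule sum.cong) auto
  also have "\<dots> = d$i * X$i$j" by simp
  finally show ?thesis .
qed

lemma diag_right: "(X ** diag_mat d)$i$j = X$i$j * d$j"
proof -
  have "(X ** diag_mat d)$i$j = (\<Sum>k\<in>UNIV. X$i$k * (if k = j then d$k else 0))"
    by (simp add: mm_comp diag_mat_def)
  also have "\<dots> = (\<Sum>k\<in>UNIV. if k = j then X$i$j * d$j else 0)"
    by (rule sum.cong) auto
  also have "\<dots> = X$i$j * d$j" by simp
  finally show ?thesis .
qed

lemma axis_col: "(X *v axis j 1)$i = X$i$j"
proof -
  have "(X *v axis j 1)$i = (\<Sum>k\<in>UNIV. X$i$k * (if k = j then 1 else 0))"
    by (simp add: mv_comp axis_def)
  also have "\<dots> = (\<Sum>k\<in>UNIV. if k = j then X$i$j else 0)"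
    by (rule sum.cong) auto
  finally show ?thesis by simp
qed

lemma pos_irr:
  fixes X :: "real^'n^'n"
  assumes "\<forall>i j. 0 < X$i$j"
  shows "irreducible_mat X"
  unfolding irreducible_mat_def
proof (intro allI)
  fix i j
  have "(i, j) \<in> {(p, q). X $ p $ q \<noteq> 0}" using assms by (metis (mono_tags) case_prodI less_irrefl mem_Collect_eq)
  then show "(i, j) \<in> {(p, q). X $ p $ q \<noteq> 0}\<^sup>+" by (rule r_into_trancl)
qed

lemma sr_lower:
  fixes X :: "real^'n^'n"
  assumes nn: "\<forall>i j. 0 \<le> X$i$j" and irr: "irreducible_mat X"
    and rows: "\<forall>i. \<alpha> \<le> (\<Sum>j\<in>UNIV. X$i$j)"
  shows "\<alpha> \<le> spec_rad X"
proof -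
  obtain v w where w: "\<forall>i. 0 < w$i" and wX: "\<forall>j. (\<Sum>i\<in>UNIV. w$i * X$i$j) = spec_rad X * w$j"
    using perron_sums[OF nn irr] by blast
  have "\<alpha> * (\<Sum>i\<in>UNIV. w$i) = (\<Sum>i\<in>UNIV. w$i * \<alpha>)" by (simp add: sum_distrib_left mult.commute)
  also have "\<dots> \<le> (\<Sum>i\<in>UNIV. w$i * (\<Sum>j\<in>UNIV. X$i$j * 1))"
    using rows w by (intro sum_mono mult_left_mono) (simp_all add: less_imp_le)
  also have "\<dots> = spec_rad X * (\<Sum>j\<in>UNIV. w$j * 1)"
    using wsum_swap[of w X "spec_rad X" "\<lambda>j. 1"] wX by blast
  finally have "\<alpha> * (\<Sum>i\<in>UNIV. w$i) \<le> spec_rad X * (\<Sum>i\<in>UNIV. w$i)" by simp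
  moreover have "0 < (\<Sum>i\<in>UNIV. w$i)" using w by (intro sum_pos) auto
  ultimately show ?thesis by simp
qed

lemma sr_strict:
  fixes X Y :: "real^'n^'n"
  assumes X: "\<forall>i j. 0 < X$i$j" and XY: "\<forall>i j. X$i$j < Y$i$j"
  shows "spec_rad X < spec_rad Y"
proof -
  have Y: "\<forall>i j. 0 < Y$i$j" using X XY by (meson less_trans)
  have Xn: "\<forall>i j. 0 \<le> X$i$j" and Yn: "\<forall>i j. 0 \<le> Y$i$j" using X Y by (simp_all add: less_imp_le)
  obtain v w1 where v: "\<forall>i. 0 < v$i" and Xv: "\<forall>i. (\<Sum>j\<in>UNIV. X$i$j * v$j) = spec_rad X * v$i"
    using perron_sums[OF Xn pos_irr[OF X]] by blast
  obtain v2 w where w: "\<forall>i. 0 < w$i" and wY: "\<forall>j. (\<Sum>i\<in>UNIV. w$i * Y$i$j) = spec_rad Y * w$j"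
    using perron_sums[OF Yn pos_irr[OF Y]] by blast
  have "spec_rad X * (\<Sum>i\<in>UNIV. w$i * v$i) = (\<Sum>i\<in>UNIV. w$i * (\<Sum>j\<in>UNIV. X$i$j * v$j))"
    using Xv by (simp add: sum_distrib_left mult_ac)
  also have "\<dots> < (\<Sum>i\<in>UNIV. w$i * (\<Sum>j\<in>UNIV. Y$i$j * v$j))"
  proof (rule sum_strict_mono)
    fix i :: 'n
    have "(\<Sum>j\<in>UNIV. X$i$j * v$j) < (\<Sum>j\<in>UNIV. Y$i$j * v$j)"
      using XY v by (intro sum_strict_mono) auto
    then show "w$i * (\<Sum>j\<in>UNIV. X$i$j * v$j) < w$i * (\<Sum>j\<in>UNIV. Y$i$j * v$j)"
      using w by simp
  qed auto
  also have "\<dots> = spec_rad Y * (\<Sum>j\<in>UNIV. w$j * v$j)"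
    using wsum_swap[of w Y "spec_rad Y" "\<lambda>j. v$j"] wY by blast
  finally have "spec_rad X * (\<Sum>i\<in>UNIV. w$i * v$i) < spec_rad Y * (\<Sum>i\<in>UNIV. w$i * v$i)" .
  moreover have "0 < (\<Sum>i\<in>UNIV. w$i * v$i)" using w v by (intro sum_pos) auto
  ultimately show ?thesis by (simp add: mult_less_cancel_right)
qed

lemma mat_sub_ldistrib: "(X::real^'n^'n) ** (Y - Z) = X ** Y - X ** Z"
  by (simp add: matrix_matrix_mult_def vec_eq_iff sum_subtractf algebra_simps)

lemma mat_sub_rdistrib: "((Y::real^'n^'n) - Z) ** X = Y ** X - Z ** X"
  by (simp add: matrix_matrix_mult_def vec_eq_iff sum_subtractf algebra_simps)



lemma pos_sum_term:
  fixes f :: "'n::finite \<Rightarrow> real"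
  assumes "\<forall>k. 0 \<le> f k" "0 < f k0"
  shows "0 < (\<Sum>k\<in>UNIV. f k)"
  by (rule sum_pos2[of UNIV k0]) (use assms in auto)

lemma pos_mult_col:
  fixes Z B :: "real^'n^'n"
  assumes Z: "\<forall>i k. 0 < Z$i$k" and Bn: "\<forall>k j. 0 \<le> B$k$j" and Bc: "\<forall>j. \<exists>k. 0 < B$k$j"
  shows "0 < (Z ** B)$i$j"
proof -
  obtain k0 where k0: "0 < B$k0$j" using Bc by blast
  have "\<forall>k. 0 \<le> Z$i$k * B$k$j" using Z Bn by (metis less_imp_le mult_nonneg_nonneg)
  moreover have "0 < Z$i$k0 * B$k0$j" using Z k0 by simp
  ultimately show ?thesis unfolding mm_comp by (rule pos_sum_term)
qed

lemma pos_RKR: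
  fixes X Y K :: "real^'n^'n"
  assumes X: "\<forall>i k. 0 < X$i$k" and Y: "\<forall>i k. 0 < Y$i$k" and Kn: "\<forall>i j. 0 \<le> K$i$j" and Kab: "0 < K$a$b"
  shows "0 < (X ** K ** Y)$i$j"
proof -
  have t1: "\<forall>k. 0 \<le> X$i$k * K$k$m" for i m using X Kn by (metis less_imp_le mult_nonneg_nonneg)
  have XK: "0 \<le> (X ** K)$i$m" for i m
    unfolding mm_comp using t1 by (simp add: sum_nonneg)
  have XKb: "0 < (X ** K)$i$b" for i
  proof -
    have "0 < X$i$a * K$a$b" using X Kab by simp
    then show ?thesis unfolding mm_comp using t1 by (intro pos_sum_term) auto
  qed
  have "\<forall>k. 0 \<le> (X ** K)$i$k * Y$k$j" using XK Y by (metis less_imp_le mult_nonneg_nonneg)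
  moreover have "0 < (X ** K)$i$b * Y$b$j" using XKb Y by simp
  ultimately show ?thesis unfolding mm_comp[of "X ** K"] by (rule pos_sum_term)
qed

lemma nn_mv:
  fixes X :: "real^'n^'n"
  assumes "\<forall>i j. 0 \<le> X$i$j" "\<forall>j. 0 \<le> y$j"
  shows "0 \<le> (X *v y)$i"
  unfolding mv_comp using assms by (auto intro!: sum_nonneg)

lemma mono_left_RKR:
  fixes X X' K Y :: "real^'n^'n"
  assumes XX: "\<forall>i k. X$i$k \<le> X'$i$k" and Kn: "\<forall>i j. 0 \<le> K$i$j" and Y: "\<forall>i k. 0 \<le> Y$i$k"
  shows "(X ** K ** Y)$i$j \<le> (X' ** K ** Y)$i$j"
proof -
  have "(X ** K)$i$m \<le> (X' ** K)$i$m" for m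
    unfolding mm_comp using XX Kn by (intro sum_mono mult_right_mono) auto
  then show ?thesis unfolding mm_comp[of _ Y] using Y by (intro sum_mono mult_right_mono) auto
qed

lemma lim_aux:
  fixes f :: "real \<Rightarrow> real"
  assumes rA: "0 < rA" and C: "0 < C" and bnd: "\<And>r. 0 < r \<Longrightarrow> r < rA \<Longrightarrow> C * r / (rA - r) \<le> f r"
  shows "filterlim f at_top (at_left rA)"
proof -
  have ev: "eventually (\<lambda>r. r \<in> {0<..<rA}) (at_left rA)"
    using eventually_at_left_real[OF rA] by simp
  have "LIM r at_left rA. (C * r) / (rA - r) :> at_top"
  proof (rule LIM_at_top_divide)
    show "((\<lambda>r. C * r) \<longlongrightarrow> C * rA) (at_left rA)" by (intro tendsto_intros)
    show "0 < C * rA" using C rA by simp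
    show "((\<lambda>r. rA - r) \<longlongrightarrow> 0) (at_left rA)"
    proof -
      have "((\<lambda>r. rA - r) \<longlongrightarrow> rA - rA) (at_left rA)" by (intro tendsto_intros)
      then show ?thesis by simp
    qed
    show "eventually (\<lambda>r. 0 < rA - r) (at_left rA)"
      using ev by eventually_elim auto
  qed
  moreover have "eventually (\<lambda>r. C * r / (rA - r) \<le> f r) (at_left rA)"
    using ev by eventually_elim (use bnd in auto)
  ultimately show ?thesis by (rule filterlim_at_top_mono)
qed



theorem mainTheorem8:
  fixes A K B :: "real^'n^'n" and \<delta> l :: "real^'n" and rA :: real
  assumes n2: "CARD('n) \<ge> 2"
    and A_nn: "nonneg_mat A" and K_nn: "nonneg_mat K" and K_nz: "K \<noteq> 0"
    and \<delta>_rng: "\<forall>j. 0 < \<delta> $ j \<and> \<delta> $ j \<le> 1"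
    and l_pos: "\<forall>j. 0 < l $ j"
    and B_nn: "nonneg_mat B" and B_col: "\<forall>j. \<exists>i. B $ i $ j \<noteq> 0"
    and irr: "irreducible_mat (A + K ** diag_mat \<delta>)"
    and sr: "spec_rad (A + K ** diag_mat \<delta>) < 1"
    and rA_pos: "0 < rA"
    and rA_def: "spec_rad (A + K ** diag_mat \<delta> + rA *\<^sub>R K) = 1"
  shows "let At = A + K ** diag_mat \<delta>;
             M = (\<lambda>r. diag_mat l ** matrix_inv (mat 1 - At - r *\<^sub>R K) ** B)
         in (\<forall>r\<in>{0..<rA}. invertible (mat 1 - At - r *\<^sub>R K))
          \<and> (\<forall>r\<in>{0..<rA}. \<forall>i j. 0 < M r $ i $ j)
          \<and> continuous_on {0..<rA} M
          \<and> (\<forall>r1 r2. 0 \<le> r1 \<longrightarrow> r1 < r2 \<longrightarrow> r2 < rA \<longrightarrow>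
                (\<forall>i j. M r1 $ i $ j < M r2 $ i $ j))
          \<and> strict_mono_on {0..<rA} (\<lambda>r. spec_rad (M r))
          \<and> filterlim (\<lambda>r. spec_rad (M r)) at_top (at_left rA)"
proof -
  define At where "At = A + K ** diag_mat \<delta>"
  define P where "P r = At + r *\<^sub>R K" for r
  define R where "R r = matrix_inv (mat 1 - P r)" for r
  define M where "M = (\<lambda>r. diag_mat l ** matrix_inv (mat 1 - At - r *\<^sub>R K) ** B)"
  have eqP: "mat 1 - At - r *\<^sub>R K = mat 1 - P r" for r by (simp add: P_def)
  have Mr: "diag_mat l ** matrix_inv (mat 1 - At - r *\<^sub>R K) ** B = M r" for r by (simp add: M_def)
  have MR: "M r = diag_mat l ** R r ** B" for r by (simp add: M_def R_def eqP)
  have Knn: "\<forall>i j. 0 \<le> K$i$j" using K_nn by (simp add: nonneg_mat_def)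
  have Bnn: "\<forall>i j. 0 \<le> B$i$j" using B_nn by (simp add: nonneg_mat_def)
  have Bc: "\<forall>j. \<exists>k. 0 < B$k$j" using B_col Bnn by (metis order_le_neq_trans)
  have Atnn: "\<forall>i j. 0 \<le> At$i$j"
    using A_nn Knn \<delta>_rng by (simp add: At_def diag_right nonneg_mat_def less_imp_le)
  have Pe: "P r $i$j = At$i$j + r * K$i$j" for r i j by (simp add: P_def)
  have Pnn: "\<forall>i j. 0 \<le> P r $i$j" if "0 \<le> r" for r
    using Atnn Knn that by (simp add: Pe)
  have Pirr: "irreducible_mat (P r)" if r0: "0 \<le> r" for r
    unfolding irreducible_mat_def
  proof (intro allI)
    fix i j
    have sub: "{(p, q). At $ p $ q \<noteq> 0} \<subseteq> {(p, q). P r $ p $ q \<noteq> 0}"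
    proof (clarsimp)
      fix p q assume "At$p$q \<noteq> 0" "P r $p$q = 0"
      moreover have "0 \<le> r * K$p$q" using r0 Knn by simp
      moreover have "0 \<le> At$p$q" using Atnn by simp
      ultimately show False by (simp add: Pe)
    qed
    have "(i, j) \<in> {(p, q). At $ p $ q \<noteq> 0}\<^sup>+" using irr by (simp add: irreducible_mat_def At_def)
    then show "(i, j) \<in> {(p, q). P r $ p $ q \<noteq> 0}\<^sup>+" using trancl_mono sub by blast
  qed
  obtain a b where Kab: "0 < K$a$b"
  proof -
    have "\<exists>a b. K$a$b \<noteq> 0" using K_nz by (metis vec_eq_iff zero_index)
    then show ?thesis using that Knn by (metis order_le_neq_trans)
  qed
  have srA: "spec_rad (P rA) = 1" using rA_def by (simp add: P_def At_def)
  obtain vA where vA: "\<forall>i. 0 < vA$i" and PvA: "\<forall>i. (\<Sum>j\<in>UNIV. P rA $i$j * vA$j) = vA$i"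
    using perron_sums[OF Pnn[OF less_imp_le[OF rA_pos]] Pirr[OF less_imp_le[OF rA_pos]]] srA by auto
  have sr_lt: "spec_rad (P r) < 1" if r: "0 \<le> r" "r < rA" for r
  proof -
    obtain w where w: "\<forall>i. 0 < w$i" and wP: "\<forall>j. (\<Sum>i\<in>UNIV. w$i * P r $i$j) = spec_rad (P r) * w$j"
      using perron_sums[OF Pnn[OF r(1)] Pirr[OF r(1)]] by blast
    define Q where "Q = (\<Sum>i\<in>UNIV. w$i * (\<Sum>j\<in>UNIV. K$i$j * vA$j))"
    define S where "S = (\<Sum>j\<in>UNIV. w$j * vA$j)"
    have "S = (\<Sum>i\<in>UNIV. w$i * (\<Sum>j\<in>UNIV. P rA $i$j * vA$j))" using PvA by (simp add: S_def)
    also have "\<dots> = (\<Sum>i\<in>UNIV. w$i * (\<Sum>j\<in>UNIV. P r $i$j * vA$j) + (rA - r) * (w$i * (\<Sum>j\<in>UNIV. K$i$j * vA$j)))"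
    proof (rule sum.cong)
      fix i :: 'n
      have pe: "P rA $i$j = P r $i$j + (rA - r) * K$i$j" for j by (simp add: Pe algebra_simps)
      have "(\<Sum>j\<in>UNIV. P rA $i$j * vA$j) = (\<Sum>j\<in>UNIV. P r $i$j * vA$j + (rA - r) * (K$i$j * vA$j))"
        by (simp add: pe distrib_right mult.assoc)
      also have "\<dots> = (\<Sum>j\<in>UNIV. P r $i$j * vA$j) + (rA - r) * (\<Sum>j\<in>UNIV. K$i$j * vA$j)"
        by (simp add: sum.distrib sum_distrib_left)
      finally have e: "(\<Sum>j\<in>UNIV. P rA $i$j * vA$j) = (\<Sum>j\<in>UNIV. P r $i$j * vA$j) + (rA - r) * (\<Sum>j\<in>UNIV. K$i$j * vA$j)" .
      show "w$i * (\<Sum>j\<in>UNIV. P rA $i$j * vA$j) = w$i * (\<Sum>j\<in>UNIV. P r $i$j * vA$j) + (rA - r) * (w$i * (\<Sum>j\<in>UNIV. K$i$j * vA$j))"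
        unfolding e by (simp only: distrib_left mult.left_commute)
    qed simp
    also have "\<dots> = spec_rad (P r) * S + (rA - r) * Q"
      using wsum_swap[of w "P r" "spec_rad (P r)" "\<lambda>j. vA$j"] wP
      by (simp add: sum.distrib S_def Q_def sum_distrib_left)
    finally have eq: "S = spec_rad (P r) * S + (rA - r) * Q" .
    have Kv: "0 \<le> (\<Sum>j\<in>UNIV. K$i$j * vA$j)" for i using Knn vA by (simp add: sum_nonneg less_imp_le)
    have "0 < (\<Sum>j\<in>UNIV. K$a$j * vA$j)"
      using Knn vA Kab by (intro pos_sum_term[of _ b]) (simp_all add: less_imp_le)
    then have "0 < Q" unfolding Q_def using Kv w
      by (intro pos_sum_term[of _ a]) (simp_all add: less_imp_le)
    moreover have "0 < S" unfolding S_def using w vA by (intro sum_pos) auto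
    ultimately show ?thesis using eq r
      by (smt (verit, ccfv_SIG) mult_less_cancel_right2 mult_pos_pos)
  qed
  have inv: "invertible (mat 1 - P r)" if "r \<in> {0..<rA}" for r
    using inv_pos(1)[OF Pnn Pirr sr_lt] that by auto
  have Rvec: "\<forall>i. 0 < (R r *v y)$i" if "r \<in> {0..<rA}" "\<forall>i. 0 \<le> y$i" "y \<noteq> 0" for r y
    using inv_pos(2)[OF Pnn Pirr sr_lt] that unfolding R_def by auto
  have Rpos: "\<forall>i j. 0 < R r $i$j" if "r \<in> {0..<rA}" for r
  proof (intro allI)
    fix i j
    have "\<forall>i. 0 \<le> (axis j 1 :: real^'n)$i" by (simp add: axis_def)
    moreover have "(axis j 1 :: real^'n) \<noteq> 0" by (simp add: axis_eq_0_iff)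
    ultimately show "0 < R r $i$j" using Rvec[OF that] axis_col by metis
  qed
  have RI: "(mat 1 - P r) ** R r = mat 1" "R r ** (mat 1 - P r) = mat 1" if "r \<in> {0..<rA}" for r
    using matinv[OF inv[OF that]] unfolding R_def by auto
  have resolv: "R s - R r = (s - r) *\<^sub>R (R s ** K ** R r)" if "r \<in> {0..<rA}" "s \<in> {0..<rA}" for r s
  proof -
    have "R s - R r = R s ** ((mat 1 - P r) ** R r) - (R s ** (mat 1 - P s)) ** R r"
      using RI that by simp
    also have "\<dots> = (R s ** (mat 1 - P r) - R s ** (mat 1 - P s)) ** R r"
      by (simp only: mat_sub_rdistrib[of "R s ** (mat 1 - P r)" "R s ** (mat 1 - P s)" "R r"] matrix_mul_assoc)
    also have "\<dots> = (R s ** ((mat 1 - P r) - (mat 1 - P s))) ** R r"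
      by (simp add: mat_sub_ldistrib)
    also have "(mat 1 - P r) - (mat 1 - P s) = (s - r) *\<^sub>R K"
      by (simp add: P_def algebra_simps)
    finally show ?thesis by (simp add: matrix_scalar_ac scalar_matrix_assoc)
  qed
  define S where "S = {0..<rA}"
  have Mentry: "M r $i$j = l$i * (R r ** B)$i$j" for r i j
    by (simp add: MR diag_left flip: matrix_mul_assoc)
  have RBpos: "0 < (R r ** B)$i$j" if "r \<in> S" for r i j
    using pos_mult_col[OF Rpos Bnn Bc] that unfolding S_def by blast
  have Mpos: "\<forall>i j. 0 < M r $i$j" if "r \<in> S" for r
    using RBpos[OF that] l_pos by (simp add: Mentry)
  have Mmono: "M r1 $i$j < M r2 $i$j" if r: "0 \<le> r1" "r1 < r2" "r2 < rA" for r1 r2 i j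
  proof -
    have S1: "r1 \<in> {0..<rA}" and S2: "r2 \<in> {0..<rA}" using r by auto
    have "(R r2 ** B)$i$j - (R r1 ** B)$i$j = ((R r2 - R r1) ** B)$i$j"
      by (simp add: mat_sub_rdistrib)
    also have "\<dots> = (r2 - r1) * ((R r2 ** K ** R r1) ** B)$i$j"
      by (simp add: resolv[OF S1 S2] flip: scalar_matrix_assoc)
    also have "\<dots> > 0"
      using pos_mult_col[OF allI[OF allI[OF pos_RKR[OF Rpos[OF S2] Rpos[OF S1] Knn Kab]]] Bnn Bc] r
      by simp
    finally have "(R r1 ** B)$i$j < (R r2 ** B)$i$j" by simp
    then show ?thesis using l_pos by (simp add: Mentry)
  qed
  have Rcont: "continuous_on {0..<rA} (\<lambda>r. R r $i$k)" for i k
    unfolding continuous_on_iff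
  proof (intro ballI allI impI)
    fix r0 e :: real assume r0: "r0 \<in> {0..<rA}" and e: "0 < e"
    define r' where "r' = (r0 + rA) / 2"
    have r'S: "r' \<in> {0..<rA}" and r0r': "r0 < r'" using r0 by (auto simp: r'_def)
    define C where "C = (R r' ** K ** R r0)$i$k"
    have C: "0 < C" unfolding C_def using pos_RKR[OF Rpos[OF r'S] Rpos[OF r0] Knn Kab] by blast
    show "\<exists>d>0. \<forall>s\<in>{0..<rA}. dist s r0 < d \<longrightarrow> dist (R s $i$k) (R r0 $i$k) < e"
    proof (intro exI[of _ "min (r' - r0) (e / C)"] conjI ballI impI)
      show "0 < min (r' - r0) (e / C)" using r0r' C e by simp
      fix s assume s: "s \<in> {0..<rA}" and ds: "dist s r0 < min (r' - r0) (e / C)"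
      have sr': "s < r'" using ds by (auto simp: dist_real_def)
      have le: "\<forall>i k. R s $i$k \<le> R r' $i$k"
      proof (intro allI)
        fix i k
        have "R r' $i$k - R s $i$k = (R r' - R s)$i$k" by simp
        also have "\<dots> = (r' - s) * (R r' ** K ** R s)$i$k" by (simp add: resolv[OF s r'S])
        also have "\<dots> \<ge> 0"
          using pos_RKR[OF Rpos[OF r'S] Rpos[OF s] Knn Kab] sr' by (simp add: less_imp_le)
        finally show "R s $i$k \<le> R r' $i$k" by simp
      qed
      have ent: "R s $i$k - R r0 $i$k = (s - r0) * (R s ** K ** R r0)$i$k"
      proof -
        have "R s $i$k - R r0 $i$k = (R s - R r0)$i$k" by simp
        also have "\<dots> = (s - r0) * (R s ** K ** R r0)$i$k" by (simp add: resolv[OF r0 s])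
        finally show ?thesis .
      qed
      have XC: "(R s ** K ** R r0)$i$k \<le> C"
        unfolding C_def using Rpos[OF r0] by (intro mono_left_RKR[OF le Knn]) (simp add: less_imp_le)
      have X0: "0 \<le> (R s ** K ** R r0)$i$k"
        using pos_RKR[OF Rpos[OF s] Rpos[OF r0] Knn Kab] by (simp add: less_imp_le)
      have "dist (R s $i$k) (R r0 $i$k) = \<bar>s - r0\<bar> * (R s ** K ** R r0)$i$k"
        using ent X0 by (simp add: dist_real_def abs_mult)
      also have "\<dots> \<le> \<bar>s - r0\<bar> * C" using XC by (simp add: mult_left_mono)
      also have "\<dots> < (e / C) * C"
        using ds C by (intro mult_strict_right_mono) (auto simp: dist_real_def)
      also have "\<dots> = e" using C by simp
      finally show "dist (R s $i$k) (R r0 $i$k) < e" .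
    qed
  qed
  have Mcomp: "continuous_on {0..<rA} (\<lambda>r. M r $i$j)" for i j
  proof -
    have eq: "(\<lambda>r. M r $i$j) = (\<lambda>r. l$i * (\<Sum>k\<in>UNIV. R r $i$k * B$k$j))"
      by (simp add: Mentry mm_comp)
    have "continuous_on {0..<rA} (\<lambda>r. R r $i$k * B$k$j)" for k
      by (rule continuous_on_mult[OF Rcont continuous_on_const])
    then have "continuous_on {0..<rA} (\<lambda>r. \<Sum>k\<in>UNIV. R r $i$k * B$k$j)"
      by (rule continuous_on_sum)
    then show ?thesis unfolding eq by (rule continuous_on_mult[OF continuous_on_const])
  qed
  have Mcont: "continuous_on {0..<rA} M"
  proof -
    have e: "(\<lambda>r. \<chi> i. \<chi> j. M r $i$j) = M" by simp
    have "continuous_on {0..<rA} (\<lambda>r. \<chi> i. \<chi> j. M r $i$j)"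
      by (intro continuous_on_vec_lambda Mcomp)
    then show ?thesis unfolding e .
  qed
  have Msm: "strict_mono_on {0..<rA} (\<lambda>r. spec_rad (M r))"
  proof (rule strict_mono_onI)
    fix r s assume rs: "r \<in> {0..<rA}" "s \<in> {0..<rA}" "r < s"
    have "r \<in> S" using rs unfolding S_def by simp
    moreover have "\<forall>i j. M r $i$j < M s $i$j" using Mmono rs by simp
    ultimately show "spec_rad (M r) < spec_rad (M s)"
      using sr_strict[OF Mpos] by blast
  qed
  have Mlim: "filterlim (\<lambda>r. spec_rad (M r)) at_top (at_left rA)"
  proof -
    define bv :: "real^'n" where "bv = (\<chi> k. \<Sum>j\<in>UNIV. B$k$j)"
    have bvnn: "\<forall>k. 0 \<le> bv$k" using Bnn by (simp add: bv_def sum_nonneg)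
    have bvnz: "bv \<noteq> 0"
    proof
      assume b0: "bv = 0"
      obtain j0 :: 'n where True by simp
      obtain k0 where k0: "0 < B$k0$j0" using Bc by blast
      have "B$k0$j0 \<le> bv$k0" unfolding bv_def using Bnn by (simp add: member_le_sum)
      then show False using k0 b0 by simp
    qed
    have S0: "0 \<in> {0..<rA}" using rA_pos by simp
    define c0 where "c0 = R 0 *v bv"
    have c0: "\<forall>i. 0 < c0$i" unfolding c0_def using Rvec[OF S0 bvnn bvnz] .
    define \<beta> where "\<beta> = Min ((\<lambda>i. c0$i / vA$i) ` UNIV)"
    have \<beta>pos: "0 < \<beta>" unfolding \<beta>_def using c0 vA by (simp add: Min_gr_iff)
    have \<beta>le: "\<beta> * vA$i \<le> c0$i" for i
    proof -
      have "\<beta> \<le> c0$i / vA$i" unfolding \<beta>_def by (simp add: Min_le_iff)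
      then show ?thesis using vA by (simp add: pos_le_divide_eq)
    qed
    define vmin where "vmin = Min ((\<lambda>i. vA$i) ` UNIV)"
    have vminpos: "0 < vmin" unfolding vmin_def using vA by (simp add: Min_gr_iff)
    have vminle: "vmin \<le> vA$i" for i unfolding vmin_def by (simp add: Min_le_iff)
    define lmin where "lmin = Min ((\<lambda>i. l$i) ` UNIV)"
    have lminpos: "0 < lmin" unfolding lmin_def using l_pos by (simp add: Min_gr_iff)
    have lminle: "lmin \<le> l$i" for i unfolding lmin_def by (simp add: Min_le_iff)
    define C where "C = lmin * \<beta> * vmin"
    have Cpos: "0 < C" unfolding C_def using lminpos \<beta>pos vminpos by simp
    show ?thesis
    proof (rule lim_aux[OF rA_pos Cpos])
      fix r :: real assume r0: "0 < r" and rA: "r < rA"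
      have rS: "r \<in> {0..<rA}" using r0 rA by simp
      have Rnn: "\<forall>i j. 0 \<le> R r $i$j" using Rpos[OF rS] by (simp add: less_imp_le)
      have key1: "(R r *v (K *v vA))$i = vA$i / (rA - r)" for i
      proof -
        have "(mat 1 - P r) *v vA = (rA - r) *\<^sub>R (K *v vA)"
        proof (subst vec_eq_iff, intro allI)
          fix i
          have pe: "P rA $i$j = P r $i$j + (rA - r) * K$i$j" for j by (simp add: Pe algebra_simps)
          have "vA$i = (\<Sum>j\<in>UNIV. P rA $i$j * vA$j)" using PvA by simp
          also have "\<dots> = (\<Sum>j\<in>UNIV. P r $i$j * vA$j + (rA - r) * (K$i$j * vA$j))"
            by (simp add: pe distrib_right mult.assoc)
          also have "\<dots> = (\<Sum>j\<in>UNIV. P r $i$j * vA$j) + (rA - r) * (\<Sum>j\<in>UNIV. K$i$j * vA$j)"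
            by (simp add: sum.distrib sum_distrib_left)
          finally have "vA$i - (\<Sum>j\<in>UNIV. P r $i$j * vA$j) = (rA - r) * (\<Sum>j\<in>UNIV. K$i$j * vA$j)"
            by simp
          then show "((mat 1 - P r) *v vA)$i = ((rA - r) *\<^sub>R (K *v vA))$i"
            by (simp add: matrix_vector_mult_diff_rdistrib mv_comp)
        qed
        then have a1: "R r *v ((mat 1 - P r) *v vA) = (rA - r) *\<^sub>R (R r *v (K *v vA))"
          by (simp add: matrix_vector_mult_scaleR)
        have a2: "R r *v ((mat 1 - P r) *v vA) = vA"
          by (simp add: matrix_vector_mul_assoc RI(2)[OF rS])
        have eq2: "(rA - r) *\<^sub>R (R r *v (K *v vA)) = vA" by (metis a1 a2)
        have "((rA - r) *\<^sub>R (R r *v (K *v vA)))$i = vA$i" by (simp only: eq2)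
        then have "(rA - r) * (R r *v (K *v vA))$i = vA$i" by (simp only: vector_scaleR_component real_scaleR_def)
        then show ?thesis using rA by (simp add: eq_divide_eq mult.commute)
      qed
      have key2: "(R r *v bv)$i = c0$i + r * (R r *v (K *v c0))$i" for i
      proof -
        have "R r = R 0 + r *\<^sub>R (R r ** K ** R 0)" using resolv[OF S0 rS] by (simp add: algebra_simps)
        then have "R r *v bv = R 0 *v bv + r *\<^sub>R ((R r ** K ** R 0) *v bv)"
          by (metis matrix_vector_mult_add_rdistrib scaleR_matrix_vector_assoc)
        also have "(R r ** K ** R 0) *v bv = R r *v (K *v c0)"
          by (simp add: c0_def matrix_vector_mul_assoc matrix_mul_assoc)
        finally show ?thesis by (simp add: c0_def)
      qed
      have key3: "\<beta> * (R r *v (K *v vA))$i \<le> (R r *v (K *v c0))$i" for i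
      proof -
        have d: "\<forall>j. 0 \<le> (c0 - \<beta> *\<^sub>R vA)$j" using \<beta>le by simp
        have "0 \<le> (K *v (c0 - \<beta> *\<^sub>R vA))$j" for j by (rule nn_mv[OF Knn d])
        then have "0 \<le> (R r *v (K *v (c0 - \<beta> *\<^sub>R vA)))$i" by (intro nn_mv[OF Rnn]) simp
        then show ?thesis
          by (simp add: matrix_vector_mult_diff_distrib matrix_vector_mult_scaleR)
      qed
      have lowb: "r * \<beta> * vmin / (rA - r) \<le> (R r *v bv)$i" for i
      proof -
        have "r * \<beta> * vmin / (rA - r) \<le> r * \<beta> * vA$i / (rA - r)"
          using vminle[of i] r0 rA \<beta>pos by (intro divide_right_mono mult_left_mono) auto
        also have "\<dots> = r * (\<beta> * (R r *v (K *v vA))$i)" by (simp add: key1)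
        also have "\<dots> \<le> r * (R r *v (K *v c0))$i" using key3[of i] r0 by (simp add: mult_left_mono)
        also have "\<dots> \<le> (R r *v bv)$i" using key2[of i] c0 by (simp add: less_imp_le)
        finally show ?thesis .
      qed
      have rows: "C * r / (rA - r) \<le> (\<Sum>j\<in>UNIV. M r $i$j)" for i
      proof -
        have "(\<Sum>j\<in>UNIV. M r $i$j) = l$i * (\<Sum>j\<in>UNIV. \<Sum>k\<in>UNIV. R r $i$k * B$k$j)"
          by (simp add: Mentry mm_comp sum_distrib_left)
        also have "(\<Sum>j\<in>UNIV. \<Sum>k\<in>UNIV. R r $i$k * B$k$j) = (\<Sum>k\<in>UNIV. \<Sum>j\<in>UNIV. R r $i$k * B$k$j)"
          by (rule sum.swap)
        also have "\<dots> = (R r *v bv)$i" by (simp add: mv_comp bv_def sum_distrib_left)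
        finally have eq: "(\<Sum>j\<in>UNIV. M r $i$j) = l$i * (R r *v bv)$i" .
        have "C * r / (rA - r) = lmin * (r * \<beta> * vmin / (rA - r))" by (simp add: C_def field_simps)
        also have "\<dots> \<le> l$i * (R r *v bv)$i"
        proof (rule mult_mono)
          show "lmin \<le> l$i" by (rule lminle)
          show "r * \<beta> * vmin / (rA - r) \<le> (R r *v bv)$i" by (rule lowb)
          show "0 \<le> l$i" using l_pos by (simp add: less_imp_le)
          show "0 \<le> r * \<beta> * vmin / (rA - r)" using r0 rA \<beta>pos vminpos by simp
        qed
        finally show ?thesis using eq by simp
      qed
      have Mnn: "\<forall>i j. 0 \<le> M r $i$j" using Mpos[of r] rS unfolding S_def by (simp add: less_imp_le)
      have Mirr: "irreducible_mat (M r)" using pos_irr Mpos[of r] rS unfolding S_def by blast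
      show "C * r / (rA - r) \<le> spec_rad (M r)"
        using sr_lower[OF Mnn Mirr] rows by blast
    qed
  qed
  show ?thesis
    unfolding Let_def At_def[symmetric] eqP MR[unfolded R_def, symmetric]
  proof (intro conjI)
    show "\<forall>r\<in>{0..<rA}. invertible (mat 1 - P r)" using inv by blast
    show "\<forall>r\<in>{0..<rA}. \<forall>i j. 0 < M r $ i $ j" using Mpos unfolding S_def by blast
    show "\<forall>r1 r2. 0 \<le> r1 \<longrightarrow> r1 < r2 \<longrightarrow> r2 < rA \<longrightarrow> (\<forall>i j. M r1 $ i $ j < M r2 $ i $ j)"
      using Mmono by blast
  qed (fact Mcont Msm Mlim)+
qed

end
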